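(* (1) The relation $\sim$ is an equivalence relation on the set of positive ABMN solutions. (2) Each equivalence class contains exactly one standard solution and exactly one default solution.
   Context: ABMN system on $\mathbb{Z}$: real variables $a_i,b_i\ge0$, $m_i,n_i$ with, for all $i$, $(a_i+b_i)(m_i+a_i)=a_im_{i+1}+b_im_{i-1}$, $(a_i+b_i)(n_i+b_i)=a_in_{i+1}+b_in_{i-1}$, $(a_i+b_i)^2=b_i(m_{i+1}-m_{i-1})$, $(a_i+b_i)^2=a_i(n_{i-1}-n_{i+1})$; positive if all $a_i,b_i>0$; $m_{\pm\infty},n_{\pm\infty}$ denote the (real) limits of $m_i,n_i$ as $i\to\pm\infty$. For a quadruple of sequences $(a,b,m,n)$, $u>0$ and $v_1,v_2\in\mathbb{R}$, set $\tau_u(a,b,m,n)=(ua,ub,um,un)$ and $\chi_{v_1,v_2}(a,b,m,n)=(a,b,m+v_1,n+v_2)$. Two solutions are related by $\sim$ if one is the image of the other under $\tau_u\circ\chi_{v_1,v_2}$ for some such $u,v_1,v_2$. A positive solution is standard if $m_{-\infty}=0$, $n_\infty=0$, $m_\infty=1$; default if $m_{-\infty}=0$, $n_\infty=0$, $m_0-m_{-1}=1$. *)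

theory Defs
  imports "HOL-Analysis.Analysis"
begin

type_synonym seq = "int \<Rightarrow> real"
type_synonym quad = "seq \<times> seq \<times> seq \<times> seq"

definition ABMN_solution :: "quad \<Rightarrow> bool" where
  "ABMN_solution q = (case q of (a, b, m, n) \<Rightarrow>
     (\<forall>i. a i \<ge> 0 \<and> b i \<ge> 0 \<and>
       (a i + b i) * (m i + a i) = a i * m (i + 1) + b i * m (i - 1) \<and>
       (a i + b i) * (n i + b i) = a i * n (i + 1) + b i * n (i - 1) \<and>
       (a i + b i)^2 = b i * (m (i + 1) - m (i - 1)) \<and>
       (a i + b i)^2 = a i * (n (i - 1) - n (i + 1))))"

definition positive_solution :: "quad \<Rightarrow> bool" where
  "positive_solution q = (ABMN_solution q \<and>
     (case q of (a, b, m, n) \<Rightarrow> (\<forall>i. a i > 0 \<and> b i > 0)))"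

definition tau :: "real \<Rightarrow> quad \<Rightarrow> quad" where
  "tau u q = (case q of (a, b, m, n) \<Rightarrow>
     ((\<lambda>i. u * a i), (\<lambda>i. u * b i), (\<lambda>i. u * m i), (\<lambda>i. u * n i)))"

definition chi :: "real \<Rightarrow> real \<Rightarrow> quad \<Rightarrow> quad" where
  "chi v1 v2 q = (case q of (a, b, m, n) \<Rightarrow>
     (a, b, (\<lambda>i. m i + v1), (\<lambda>i. n i + v2)))"

definition abmn_sim :: "quad \<Rightarrow> quad \<Rightarrow> bool" where
  "abmn_sim x y = (\<exists>u v1 v2. u > 0 \<and>
      (y = tau u (chi v1 v2 x) \<or> x = tau u (chi v1 v2 y)))"

definition standard_solution :: "quad \<Rightarrow> bool" where
  "standard_solution q = (positive_solution q \<and>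
     (case q of (a, b, m, n) \<Rightarrow>
        (m \<longlongrightarrow> 0) at_bot \<and> (n \<longlongrightarrow> 0) at_top \<and> (m \<longlongrightarrow> 1) at_top))"

definition default_solution :: "quad \<Rightarrow> bool" where
  "default_solution q = (positive_solution q \<and>
     (case q of (a, b, m, n) \<Rightarrow>
        (m \<longlongrightarrow> 0) at_bot \<and> (n \<longlongrightarrow> 0) at_top \<and> m 0 - m (-1) = 1))"

end

theory Submission
  imports Defs
begin

definition TT :: "real \<Rightarrow> real \<Rightarrow> real \<Rightarrow> quad \<Rightarrow> quad" where
  "TT \<alpha> \<beta> \<gamma> q = (case q of (a, b, m, n) \<Rightarrow>
     ((\<lambda>i. \<alpha> * a i), (\<lambda>i. \<alpha> * b i), (\<lambda>i. \<alpha> * m i + \<beta>), (\<lambda>i. \<alpha> * n i + \<gamma>)))"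

lemma TT_simp: "TT \<alpha> \<beta> \<gamma> (a,b,m,n) =
     ((\<lambda>i. \<alpha> * a i), (\<lambda>i. \<alpha> * b i), (\<lambda>i. \<alpha> * m i + \<beta>), (\<lambda>i. \<alpha> * n i + \<gamma>))"
  by (simp add: TT_def)

lemma TT_comp: "TT \<alpha> \<beta> \<gamma> (TT \<alpha>' \<beta>' \<gamma>' x) = TT (\<alpha>*\<alpha>') (\<alpha>*\<beta>'+\<beta>) (\<alpha>*\<gamma>'+\<gamma>) x"
  by (cases x) (auto simp: TT_def fun_eq_iff algebra_simps)

lemma TT_id: "TT 1 0 0 x = x"
  by (cases x) (auto simp: TT_def)

lemma TT_inv: "\<alpha> > 0 \<Longrightarrow> TT (1/\<alpha>) (-\<beta>/\<alpha>) (-\<gamma>/\<alpha>) (TT \<alpha> \<beta> \<gamma> x) = x"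
  by (cases x) (auto simp: TT_def fun_eq_iff field_simps)

lemma tau_chi: "tau u (chi v1 v2 x) = TT u (u * v1) (u * v2) x"
  by (cases x) (auto simp: TT_def tau_def chi_def fun_eq_iff algebra_simps)

lemma TT_tau: "\<alpha> > 0 \<Longrightarrow> TT \<alpha> \<beta> \<gamma> x = tau \<alpha> (chi (\<beta>/\<alpha>) (\<gamma>/\<alpha>) x)"
  by (simp add: tau_chi)

lemma sim_iff: "abmn_sim x y \<longleftrightarrow> (\<exists>\<alpha> \<beta> \<gamma>. \<alpha> > 0 \<and> y = TT \<alpha> \<beta> \<gamma> x)"
proof
  assume "abmn_sim x y"
  then obtain u v1 v2 where u: "u > 0" and h: "y = tau u (chi v1 v2 x) \<or> x = tau u (chi v1 v2 y)"
    unfolding abmn_sim_def by blast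
  show "\<exists>\<alpha> \<beta> \<gamma>. \<alpha> > 0 \<and> y = TT \<alpha> \<beta> \<gamma> x"
  proof (cases "y = tau u (chi v1 v2 x)")
    case True then show ?thesis using u by (auto simp: tau_chi)
  next
    case False
    then have xe: "x = TT u (u * v1) (u * v2) y" using h by (simp add: tau_chi)
    have "TT (1/u) (-(u * v1)/u) (-(u * v2)/u) x = y" unfolding xe by (rule TT_inv[OF u])
    then have "y = TT (1/u) (-(u * v1)/u) (-(u * v2)/u) x" by simp
    moreover have "1/u > 0" using u by simp
    ultimately show ?thesis by blast
  qed
next
  assume "\<exists>\<alpha> \<beta> \<gamma>. \<alpha> > 0 \<and> y = TT \<alpha> \<beta> \<gamma> x"
  then obtain \<alpha> \<beta> \<gamma> where "\<alpha> > 0" "y = TT \<alpha> \<beta> \<gamma> x" by blast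
  then show "abmn_sim x y" unfolding abmn_sim_def using TT_tau by blast
qed

lemma scale_eq1:
  fixes a b m m1 m0 \<alpha> \<beta> :: real
  assumes "(a+b)*(m+a) = a*m1 + b*m0"
  shows "(\<alpha>*a+\<alpha>*b)*((\<alpha>*m+\<beta>)+\<alpha>*a) = \<alpha>*a*(\<alpha>*m1+\<beta>) + \<alpha>*b*(\<alpha>*m0+\<beta>)"
proof -
  have "(\<alpha>*a+\<alpha>*b)*((\<alpha>*m+\<beta>)+\<alpha>*a) - (\<alpha>*a*(\<alpha>*m1+\<beta>) + \<alpha>*b*(\<alpha>*m0+\<beta>))
      = \<alpha>^2*((a+b)*(m+a) - (a*m1 + b*m0))" by (simp add: algebra_simps power2_eq_square)
  then show ?thesis using assms by simp
qed

lemma scale_eq2: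
  fixes a b m m1 m0 \<alpha> \<beta> :: real
  assumes "(a+b)*(m+b) = a*m1 + b*m0"
  shows "(\<alpha>*a+\<alpha>*b)*((\<alpha>*m+\<beta>)+\<alpha>*b) = \<alpha>*a*(\<alpha>*m1+\<beta>) + \<alpha>*b*(\<alpha>*m0+\<beta>)"
proof -
  have "(\<alpha>*a+\<alpha>*b)*((\<alpha>*m+\<beta>)+\<alpha>*b) - (\<alpha>*a*(\<alpha>*m1+\<beta>) + \<alpha>*b*(\<alpha>*m0+\<beta>))
      = \<alpha>^2*((a+b)*(m+b) - (a*m1 + b*m0))" by (simp add: algebra_simps power2_eq_square)
  then show ?thesis using assms by simp
qed

lemma scale_eq3:
  fixes a b c m1 m0 \<alpha> \<beta> :: real
  assumes "(a+b)^2 = c*(m1 - m0)"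
  shows "(\<alpha>*a+\<alpha>*b)^2 = \<alpha>*c*((\<alpha>*m1+\<beta>) - (\<alpha>*m0+\<beta>))"
proof -
  have "(\<alpha>*a+\<alpha>*b)^2 = \<alpha>^2*(a+b)^2" by (simp add: algebra_simps power2_eq_square)
  also have "\<dots> = \<alpha>^2*(c*(m1 - m0))" using assms by simp
  also have "\<dots> = \<alpha>*c*((\<alpha>*m1+\<beta>) - (\<alpha>*m0+\<beta>))" by (simp add: algebra_simps power2_eq_square)
  finally show ?thesis .
qed

lemma TT_pos:
  assumes "positive_solution x" "\<alpha> > 0"
  shows "positive_solution (TT \<alpha> \<beta> \<gamma> x)"
proof -
  obtain a b m n where x: "x = (a,b,m,n)" by (cases x)
  have h: "\<And>i. a i > 0 \<and> b i > 0 \<and>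
       (a i + b i) * (m i + a i) = a i * m (i + 1) + b i * m (i - 1) \<and>
       (a i + b i) * (n i + b i) = a i * n (i + 1) + b i * n (i - 1) \<and>
       (a i + b i)^2 = b i * (m (i + 1) - m (i - 1)) \<and>
       (a i + b i)^2 = a i * (n (i - 1) - n (i + 1))"
    using assms(1) unfolding x positive_solution_def ABMN_solution_def prod.case by blast
  show ?thesis unfolding x TT_simp positive_solution_def ABMN_solution_def
  proof (simp only: prod.case, intro allI conjI)
    fix i
    from h[of i] show "0 \<le> \<alpha> * a i" "0 \<le> \<alpha> * b i" "0 < \<alpha> * a i" "0 < \<alpha> * b i"
      using assms(2) by auto
    from h[of i] show "(\<alpha>*a i+\<alpha>*b i)*((\<alpha>*m i+\<beta>)+\<alpha>*a i) = \<alpha>*a i*(\<alpha>*m (i+1)+\<beta>) + \<alpha>*b i*(\<alpha>*m (i-1)+\<beta>)"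
      by (intro scale_eq1) auto
    from h[of i] show "(\<alpha>*a i+\<alpha>*b i)*((\<alpha>*n i+\<gamma>)+\<alpha>*b i) = \<alpha>*a i*(\<alpha>*n (i+1)+\<gamma>) + \<alpha>*b i*(\<alpha>*n (i-1)+\<gamma>)"
      by (intro scale_eq2) auto
    from h[of i] show "(\<alpha>*a i+\<alpha>*b i)^2 = \<alpha>*b i*((\<alpha>*m (i+1)+\<beta>) - (\<alpha>*m (i-1)+\<beta>))"
      by (intro scale_eq3) auto
    from h[of i] show "(\<alpha>*a i+\<alpha>*b i)^2 = \<alpha>*a i*((\<alpha>*n (i-1)+\<gamma>) - (\<alpha>*n (i+1)+\<gamma>))"
      by (intro scale_eq3) auto
  qed
qed


lemma tendsto_int_top:
  fixes f :: "int \<Rightarrow> real"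
  assumes "(\<lambda>k. f (int k)) \<longlonglongrightarrow> L"
  shows "(f \<longlongrightarrow> L) at_top"
  unfolding tendsto_iff
proof (intro allI impI)
  fix e :: real assume "e > 0"
  with assms have "eventually (\<lambda>k. dist (f (int k)) L < e) sequentially"
    by (simp add: tendsto_iff)
  then obtain N where N: "\<And>k. k \<ge> N \<Longrightarrow> dist (f (int k)) L < e"
    unfolding eventually_sequentially by blast
  show "eventually (\<lambda>i. dist (f i) L < e) at_top"
    unfolding eventually_at_top_linorder
  proof (intro exI[of _ "int N"] allI impI)
    fix i assume "i \<ge> int N"
    then have "i = int (nat i)" "nat i \<ge> N" by auto
    then show "dist (f i) L < e" using N by metis
  qed
qed

lemma tendsto_int_bot:
  fixes f :: "int \<Rightarrow> real"
  assumes "(\<lambda>k. f (- int k)) \<longlonglongrightarrow> L"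
  shows "(f \<longlongrightarrow> L) at_bot"
  unfolding tendsto_iff
proof (intro allI impI)
  fix e :: real assume "e > 0"
  with assms have "eventually (\<lambda>k. dist (f (- int k)) L < e) sequentially"
    by (simp add: tendsto_iff)
  then obtain N where N: "\<And>k. k \<ge> N \<Longrightarrow> dist (f (- int k)) L < e"
    unfolding eventually_sequentially by blast
  show "eventually (\<lambda>i. dist (f i) L < e) at_bot"
    unfolding eventually_at_bot_linorder
  proof (intro exI[of _ "- int N"] allI impI)
    fix i assume "i \<le> - int N"
    then have "i = - int (nat (-i))" "nat (-i) \<ge> N" by auto
    then show "dist (f i) L < e" using N by metis
  qed
qed

lemma summable_decay:
  fixes r s :: "nat \<Rightarrow> real"
  assumes rpos: "\<And>k. r k > 0" and spos: "\<And>k. s k \<ge> 0"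
    and rrec: "\<And>k. r (Suc k) \<le> (r k)^2 / (2 + r k)"
    and srec: "\<And>k. s (Suc k) \<le> s k * r k / 2"
  shows "summable s"
proof -
  define q where "q = r 0 / (2 + r 0)"
  have q0: "q \<ge> 0" "q < 1" using rpos[of 0] by (auto simp: q_def field_simps)
  have rb: "r k \<le> r 0 * q ^ k" for k
  proof (induction k)
    case 0 then show ?case by simp
  next
    case (Suc k)
    have "q ^ k \<le> 1" using q0 by (simp add: power_le_one)
    then have "r 0 * q ^ k \<le> r 0 * 1" using rpos[of 0] by (intro mult_left_mono) auto
    then have rk: "r k \<le> r 0" using Suc by simp
    have "r k * (2 + r 0) \<le> r 0 * (2 + r k)" using rk by (simp add: algebra_simps)
    then have rq: "r k / (2 + r k) \<le> q" unfolding q_def using rpos[of k] rpos[of 0]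
      by (simp add: divide_simps)
    have "(r k)^2 / (2 + r k) = r k * (r k / (2 + r k))" by (simp add: power2_eq_square)
    also have "\<dots> \<le> r k * q" using rq rpos[of k] by (intro mult_left_mono) auto
    also have "\<dots> \<le> r 0 * q ^ k * q" using Suc q0 by (intro mult_right_mono) auto
    finally show ?case using rrec[of k] by (simp add: algebra_simps)
  qed
  have "r 0 > 0" using rpos by simp
  obtain N where N: "q ^ N < 1 / r 0"
    using real_arch_pow_inv[of "1 / r 0" q] q0 \<open>r 0 > 0\<close> by auto
  show ?thesis
  proof (rule summable_ratio_test[of "1/2" N])
    fix n assume "n \<ge> N"
    then have "q ^ n \<le> q ^ N" using q0 by (simp add: power_decreasing)
    then have "r 0 * q ^ n \<le> r 0 * q ^ N" using \<open>r 0 > 0\<close> by (intro mult_left_mono) auto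
    also have "\<dots> < r 0 * (1 / r 0)" using N \<open>r 0 > 0\<close> by (intro mult_strict_left_mono) auto
    finally have "r 0 * q ^ n < 1" using \<open>r 0 > 0\<close> by simp
    then have "r n \<le> 1" using rb[of n] by simp
    then have "s n * r n / 2 \<le> s n / 2" using spos[of n] by (simp add: mult_left_le)
    then show "norm (s (Suc n)) \<le> 1/2 * norm (s n)"
      using srec[of n] spos[of n] spos[of "Suc n"] by simp
  qed simp
qed


lemma sol_eqs:
  assumes "positive_solution (a,b,m,n)"
  shows "a i > 0 \<and> b i > 0 \<and>
       (a i + b i) * (m i + a i) = a i * m (i + 1) + b i * m (i - 1) \<and>
       (a i + b i) * (n i + b i) = a i * n (i + 1) + b i * n (i - 1) \<and>
       (a i + b i)^2 = b i * (m (i + 1) - m (i - 1)) \<and>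
       (a i + b i)^2 = a i * (n (i - 1) - n (i + 1))"
  using assms unfolding positive_solution_def ABMN_solution_def prod.case by blast

lemma sol_D:
  assumes "positive_solution (a,b,m,n)"
  shows "b i * (m i - m (i-1)) = a i ^ 2" "n i - n (i-1) = -(a i + 2 * b i)"
proof -
  define A B where "A = a i" "B = b i"
  have pos: "A > 0" "B > 0" and e1: "(A+B)*(m i + A) = A * m (i+1) + B * m (i-1)"
    and e2: "(A+B)*(n i + B) = A * n (i+1) + B * n (i-1)"
    and e3: "(A+B)^2 = B * (m (i+1) - m (i-1))"
    and e4: "(A+B)^2 = A * (n (i-1) - n (i+1))"
    using sol_eqs[OF assms, of i] unfolding A_B_def by auto
  have "(A+B)*(B*(m i - m (i-1)) - A^2) =
     B*((A+B)*(m i+A) - (A * m (i+1) + B * m (i-1))) + A*(B*(m (i+1) - m (i-1)) - (A+B)^2)"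
    by (simp add: algebra_simps power2_eq_square)
  also have "\<dots> = 0" using e1 e3 by simp
  finally have "B*(m i - m (i-1)) - A^2 = 0" using pos by simp
  then show "b i * (m i - m (i-1)) = a i ^ 2" unfolding A_B_def by simp
  have "(A+B)*((n i - n (i-1)) + (A + 2*B)) =
     ((A+B)*(n i + B) - (A * n (i+1) + B * n (i-1))) + ((A+B)^2 - A * (n (i-1) - n (i+1)))"
    by (simp add: algebra_simps power2_eq_square)
  also have "\<dots> = 0" using e2 e4 by simp
  finally have "(n i - n (i-1)) + (A + 2*B) = 0" using pos by simp
  then show "n i - n (i-1) = -(a i + 2 * b i)" unfolding A_B_def by simp
qed

lemma sol_facts:
  assumes "positive_solution (a,b,m,n)"
  shows "a i > 0" "b i > 0" "m (i+1) - m i = 2 * a i + b i"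
    "n i - n (i+1) = a (i+1) + 2 * b (i+1)"
    "a (i+1) ^ 2 = (2 * a i + b i) * b (i+1)"
    "a i * (a (i+1) + 2 * b (i+1)) = b i ^ 2"
proof -
  define A B where "A = a i" "B = b i"
  have pos: "A > 0" "B > 0"
    and e3: "(A+B)^2 = B * (m (i+1) - m (i-1))"
    and e4: "(A+B)^2 = A * (n (i-1) - n (i+1))"
    using sol_eqs[OF assms, of i] unfolding A_B_def by auto
  show "a i > 0" "b i > 0" using pos unfolding A_B_def by auto
  have d1: "B * (m i - m (i-1)) = A^2" "n i - n (i-1) = -(A + 2 * B)"
    using sol_D[OF assms, of i] unfolding A_B_def by auto
  have d2: "b (i+1) * (m (i+1) - m i) = a (i+1) ^ 2" "n (i+1) - n i = -(a (i+1) + 2 * b (i+1))"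
    using sol_D[OF assms, of "i+1"] by auto
  have "B * ((m (i+1) - m i) - (2*A+B)) = B * (m (i+1) - m (i-1)) - (A+B)^2 - (B * (m i - m (i-1)) - A^2)"
    by (simp add: algebra_simps power2_eq_square)
  also have "\<dots> = 0" using e3 d1 by simp
  finally have M: "m (i+1) - m i = 2*A+B" using pos by simp
  then show "m (i+1) - m i = 2 * a i + b i" unfolding A_B_def by simp
  show "n i - n (i+1) = a (i+1) + 2 * b (i+1)" using d2 by simp
  show "a (i+1) ^ 2 = (2 * a i + b i) * b (i+1)" using d2(1) M unfolding A_B_def by (simp add: mult.commute)
  have q: "a (i+1) + 2 * b (i+1) = (n (i-1) - n (i+1)) - (n (i-1) - n i)" using d2(2) by simp
  have "A * (a (i+1) + 2 * b (i+1)) = A * (n (i-1) - n (i+1)) - A * (n (i-1) - n i)"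
    unfolding q by (simp only: right_diff_distrib)
  also have "\<dots> = (A+B)^2 - A * (A + 2*B)" using e4 d1(2) by simp
  also have "\<dots> = B^2" by (simp add: algebra_simps power2_eq_square)
  finally show "a i * (a (i+1) + 2 * b (i+1)) = b i ^ 2" unfolding A_B_def .
qed


lemma fwd_ineq:
  fixes a b x y :: real
  assumes pos: "a > 0" "b > 0" "x > 0" "y > 0"
    and K1: "x^2 = (2*a+b)*y" and K2: "a*(x+2*y) = b^2"
  shows "y/x \<le> (b/a)^2/(2+b/a)" "x+2*y \<le> (a+2*b)*(b/a)/2"
proof -
  have "y/x = x/(2*a+b)" using K1 pos by (simp add: field_simps power2_eq_square)
  also have "\<dots> \<le> (b^2/a)/(2*a+b)"
  proof (rule divide_right_mono)
    have "x \<le> x + 2*y" using pos by simp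
    also have "\<dots> = b^2/a" using K2 pos by (simp add: field_simps)
    finally show "x \<le> b^2/a" .
  qed (use pos in simp)
  also have "\<dots> = (b/a)^2/(2+b/a)" using pos by (simp add: field_simps power2_eq_square)
  finally show "y/x \<le> (b/a)^2/(2+b/a)" .
  have "x+2*y = b*(b/a)" using K2 pos by (simp add: field_simps power2_eq_square)
  also have "\<dots> \<le> ((a+2*b)/2)*(b/a)" using pos by (intro mult_right_mono) auto
  finally show "x+2*y \<le> (a+2*b)*(b/a)/2" by simp
qed

lemma bwd_ineq:
  fixes a b x y :: real
  assumes pos: "a > 0" "b > 0" "x > 0" "y > 0"
    and K1: "x^2 = (2*a+b)*y" and K2: "a*(x+2*y) = b^2"
  shows "a/b \<le> (x/y)^2/(x/y+2)" "2*a+b \<le> (2*x+y)*(x/y)/2"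
proof -
  have "a/b = b/(x+2*y)" using K2 pos by (simp add: field_simps power2_eq_square)
  also have "\<dots> \<le> (x^2/y)/(x+2*y)"
  proof (rule divide_right_mono)
    have "b \<le> 2*a+b" using pos by simp
    also have "\<dots> = x^2/y" using K1 pos by (simp add: field_simps)
    finally show "b \<le> x^2/y" .
  qed (use pos in simp)
  also have "\<dots> = (x/y)^2/(x/y+2)" using pos by (simp add: field_simps power2_eq_square)
  finally show "a/b \<le> (x/y)^2/(x/y+2)" .
  have "2*a+b = x*(x/y)" using K1 pos by (simp add: field_simps power2_eq_square)
  also have "\<dots> \<le> ((2*x+y)/2)*(x/y)" using pos by (intro mult_right_mono) auto
  finally show "2*a+b \<le> (2*x+y)*(x/y)/2" by simp
qed


lemma sol_limits:
  assumes sol: "positive_solution (a,b,m,n)"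
  shows "\<exists>L0 L1 N1. (m \<longlongrightarrow> L0) at_bot \<and> (m \<longlongrightarrow> L1) at_top \<and> (n \<longlongrightarrow> N1) at_top \<and> L0 < L1"
proof -
  have ap: "\<And>i. a i > 0" and bp: "\<And>i. b i > 0" using sol_facts[OF sol] by auto
  have M: "\<And>i. m (i+1) - m i = 2 * a i + b i" using sol_facts[OF sol] by auto
  have N: "\<And>i. n i - n (i+1) = a (i+1) + 2 * b (i+1)" using sol_facts[OF sol] by auto
  have K1: "\<And>i. a (i+1) ^ 2 = (2 * a i + b i) * b (i+1)" using sol_facts[OF sol] by auto
  have K2: "\<And>i. a i * (a (i+1) + 2 * b (i+1)) = b i ^ 2" using sol_facts[OF sol] by auto
  define s where "s k = a (int k) + 2 * b (int k)" for k
  define r where "r k = b (int k) / a (int k)" for k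
  have fi: "r (Suc k) \<le> (r k)^2 / (2 + r k) \<and> s (Suc k) \<le> s k * r k / 2" for k
  proof -
    have i1: "int (Suc k) = int k + 1" by simp
    show ?thesis unfolding s_def r_def i1
      using fwd_ineq[OF ap[of "int k"] bp[of "int k"] ap[of "int k + 1"] bp[of "int k + 1"]
          K1[of "int k"] K2[of "int k"]] by (simp add: mult.commute)
  qed
  have ss: "summable s"
  proof (rule summable_decay[of r])
    fix k
    show "r k > 0" using ap[of "int k"] bp[of "int k"] by (simp add: r_def)
    show "s k \<ge> 0" using ap[of "int k"] bp[of "int k"] by (simp add: s_def)
  qed (use fi in auto)
  define f where "f k = 2 * a (int k) + b (int k)" for k
  have fs: "summable f"
  proof (rule summable_comparison_test'[of "\<lambda>k. 2 * s k" 0])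
    show "summable (\<lambda>k. 2 * s k)" using ss by (rule summable_mult)
    fix k show "norm (f k) \<le> 2 * s k" using ap[of "int k"] bp[of "int k"]
      unfolding f_def s_def by simp
  qed
  have mf: "m (int k) = m 0 + (\<Sum>j<k. f j)" for k
  proof (induction k)
    case 0 then show ?case by simp
  next
    case (Suc k)
    have "m (int (Suc k)) = m (int k + 1)" by (simp add: add.commute)
    also have "\<dots> = m (int k) + f k" using M[of "int k"] unfolding f_def by simp
    finally show ?case using Suc by simp
  qed
  have L1: "(m \<longlongrightarrow> m 0 + suminf f) at_top"
  proof (rule tendsto_int_top)
    have "(\<lambda>k. m 0 + (\<Sum>j<k. f j)) \<longlonglongrightarrow> m 0 + suminf f"
      by (intro tendsto_add tendsto_const summable_LIMSEQ fs)
    then show "(\<lambda>k. m (int k)) \<longlonglongrightarrow> m 0 + suminf f" by (simp add: mf)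
  qed
  have ss1: "summable (\<lambda>k. s (Suc k))" using ss by (simp add: summable_Suc_iff)
  have nf: "n (int k) = n 0 - (\<Sum>j<k. s (Suc j))" for k
  proof (induction k)
    case 0 then show ?case by simp
  next
    case (Suc k)
    have "n (int (Suc k)) = n (int k + 1)" by (simp add: add.commute)
    also have "\<dots> = n (int k) - s (Suc k)" using N[of "int k"] unfolding s_def by (simp add: add.commute)
    finally show ?case using Suc by simp
  qed
  have N1: "(n \<longlongrightarrow> n 0 - suminf (\<lambda>k. s (Suc k))) at_top"
  proof (rule tendsto_int_top)
    have "(\<lambda>k. n 0 - (\<Sum>j<k. s (Suc j))) \<longlonglongrightarrow> n 0 - suminf (\<lambda>k. s (Suc k))"
      by (intro tendsto_diff tendsto_const summable_LIMSEQ ss1)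
    then show "(\<lambda>k. n (int k)) \<longlonglongrightarrow> n 0 - suminf (\<lambda>k. s (Suc k))" by (simp add: nf)
  qed
  define T where "T k = 2 * a (- int k - 1) + b (- int k - 1)" for k
  define \<sigma> where "\<sigma> k = a (- int k - 1) / b (- int k - 1)" for k
  have bi: "\<sigma> (Suc k) \<le> (\<sigma> k)^2 / (2 + \<sigma> k) \<and> T (Suc k) \<le> T k * \<sigma> k / 2" for k
  proof -
    have i1: "- int (Suc k) - 1 = - int k - 2" by simp
    have i2: "- int k - 2 + 1 = - int k - 1" by simp
    have k1: "a (- int k - 1) ^ 2 = (2 * a (- int k - 2) + b (- int k - 2)) * b (- int k - 1)"
      using K1[of "- int k - 2"] unfolding i2 .
    have k2: "a (- int k - 2) * (a (- int k - 1) + 2 * b (- int k - 1)) = b (- int k - 2) ^ 2"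
      using K2[of "- int k - 2"] unfolding i2 .
    show ?thesis unfolding T_def \<sigma>_def i1
      using bwd_ineq[OF ap[of "- int k - 2"] bp[of "- int k - 2"] ap[of "- int k - 1"] bp[of "- int k - 1"]
          k1 k2] by (simp add: add.commute mult.commute)
  qed
  have Ts: "summable T"
  proof (rule summable_decay[of \<sigma>])
    fix k
    show "\<sigma> k > 0" using ap[of "- int k - 1"] bp[of "- int k - 1"] by (simp add: \<sigma>_def)
    show "T k \<ge> 0" using ap[of "- int k - 1"] bp[of "- int k - 1"] by (simp add: T_def)
  qed (use bi in auto)
  have mb: "m (- int k) = m 0 - (\<Sum>j<k. T j)" for k
  proof (induction k)
    case 0 then show ?case by simp
  next
    case (Suc k)
    have i3: "- int k - 1 + 1 = - int k" by simp
    have "- int (Suc k) = - int k - 1" by simp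
    then have "m (- int (Suc k)) = m (- int k - 1)" by (rule arg_cong)
    also have "\<dots> = m (- int k) - T k" using M[of "- int k - 1"] unfolding T_def i3 by simp
    finally show ?case using Suc by simp
  qed
  have L0: "(m \<longlongrightarrow> m 0 - suminf T) at_bot"
  proof (rule tendsto_int_bot)
    have "(\<lambda>k. m 0 - (\<Sum>j<k. T j)) \<longlonglongrightarrow> m 0 - suminf T"
      by (intro tendsto_diff tendsto_const summable_LIMSEQ Ts)
    then show "(\<lambda>k. m (- int k)) \<longlonglongrightarrow> m 0 - suminf T" by (simp add: mb)
  qed
  have "suminf T > 0" using Ts
  proof (rule suminf_pos)
    fix k show "T k > 0" using ap[of "- int k - 1"] bp[of "- int k - 1"] by (simp add: T_def)
  qed
  moreover have "suminf f \<ge> 0" using fs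
  proof (rule suminf_nonneg)
    fix k show "f k \<ge> 0" using ap[of "int k"] bp[of "int k"] by (simp add: f_def)
  qed
  ultimately have "m 0 - suminf T < m 0 + suminf f" by simp
  then show ?thesis using L0 L1 N1 by blast
qed


lemma sim_refl: "abmn_sim x x"
  using TT_id sim_iff by (metis zero_less_one)

lemma sim_sym: "abmn_sim x y \<Longrightarrow> abmn_sim y x"
  unfolding abmn_sim_def by blast

lemma sim_trans:
  assumes "abmn_sim x y" "abmn_sim y z" shows "abmn_sim x z"
proof -
  obtain \<alpha> \<beta> \<gamma> where 1: "\<alpha> > 0" "y = TT \<alpha> \<beta> \<gamma> x" using assms(1) sim_iff by blast
  obtain \<alpha>' \<beta>' \<gamma>' where 2: "\<alpha>' > 0" "z = TT \<alpha>' \<beta>' \<gamma>' y" using assms(2) sim_iff by blast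
  have "z = TT (\<alpha>'*\<alpha>) (\<alpha>'*\<beta>+\<beta>') (\<alpha>'*\<gamma>+\<gamma>') x" using 1 2 by (simp add: TT_comp)
  moreover have "\<alpha>'*\<alpha> > 0" using 1 2 by simp
  ultimately show ?thesis using sim_iff by blast
qed

lemma sim_same:
  assumes "abmn_sim x y1" "abmn_sim x y2"
  shows "\<exists>\<alpha> \<beta> \<gamma>. \<alpha> > 0 \<and> y2 = TT \<alpha> \<beta> \<gamma> y1"
  using sim_trans[OF sim_sym[OF assms(1)] assms(2)] sim_iff by blast

lemma standard_unique:
  assumes "standard_solution y" "standard_solution (TT \<alpha> \<beta> \<gamma> y)" "\<alpha> > 0"
  shows "TT \<alpha> \<beta> \<gamma> y = y"
proof -
  obtain a b m n where y: "y = (a,b,m,n)" by (cases y)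
  have h: "(m \<longlongrightarrow> 0) at_bot" "(n \<longlongrightarrow> 0) at_top" "(m \<longlongrightarrow> 1) at_top"
    and h': "((\<lambda>i. \<alpha> * m i + \<beta>) \<longlongrightarrow> 0) at_bot" "((\<lambda>i. \<alpha> * n i + \<gamma>) \<longlongrightarrow> 0) at_top"
       "((\<lambda>i. \<alpha> * m i + \<beta>) \<longlongrightarrow> 1) at_top"
    using assms unfolding y TT_simp standard_solution_def by auto
  have "((\<lambda>i. \<alpha> * m i + \<beta>) \<longlongrightarrow> \<alpha> * 0 + \<beta>) at_bot"
    by (intro tendsto_intros h)
  then have b0: "\<beta> = 0" using tendsto_unique[OF _ _ h'(1)] by simp
  have "((\<lambda>i. \<alpha> * n i + \<gamma>) \<longlongrightarrow> \<alpha> * 0 + \<gamma>) at_top"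
    by (intro tendsto_intros h)
  then have g0: "\<gamma> = 0" using tendsto_unique[OF _ _ h'(2)] by simp
  have "((\<lambda>i. \<alpha> * m i + \<beta>) \<longlongrightarrow> \<alpha> * 1 + \<beta>) at_top"
    by (intro tendsto_intros h)
  then have a1: "\<alpha> = 1" using tendsto_unique[OF _ _ h'(3)] b0 by simp
  show ?thesis using a1 b0 g0 TT_id by simp
qed

lemma default_unique:
  assumes "default_solution y" "default_solution (TT \<alpha> \<beta> \<gamma> y)" "\<alpha> > 0"
  shows "TT \<alpha> \<beta> \<gamma> y = y"
proof -
  obtain a b m n where y: "y = (a,b,m,n)" by (cases y)
  have h: "(m \<longlongrightarrow> 0) at_bot" "(n \<longlongrightarrow> 0) at_top" "m 0 - m (-1) = 1"
    and h': "((\<lambda>i. \<alpha> * m i + \<beta>) \<longlongrightarrow> 0) at_bot" "((\<lambda>i. \<alpha> * n i + \<gamma>) \<longlongrightarrow> 0) at_top"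
       "(\<alpha> * m 0 + \<beta>) - (\<alpha> * m (-1) + \<beta>) = 1"
    using assms unfolding y TT_simp default_solution_def by auto
  have "((\<lambda>i. \<alpha> * m i + \<beta>) \<longlongrightarrow> \<alpha> * 0 + \<beta>) at_bot"
    by (intro tendsto_intros h)
  then have b0: "\<beta> = 0" using tendsto_unique[OF _ _ h'(1)] by simp
  have "((\<lambda>i. \<alpha> * n i + \<gamma>) \<longlongrightarrow> \<alpha> * 0 + \<gamma>) at_top"
    by (intro tendsto_intros h)
  then have g0: "\<gamma> = 0" using tendsto_unique[OF _ _ h'(2)] by simp
  have "\<alpha> * (m 0 - m (-1)) = 1" using h'(3) by (simp add: algebra_simps)
  then have a1: "\<alpha> = 1" using h(3) by simp
  show ?thesis using a1 b0 g0 TT_id by simp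
qed

lemma standard_exists:
  assumes "positive_solution x"
  shows "\<exists>y. positive_solution y \<and> abmn_sim x y \<and> standard_solution y"
proof -
  obtain a b m n where x: "x = (a,b,m,n)" by (cases x)
  obtain L0 L1 N1 where L: "(m \<longlongrightarrow> L0) at_bot" "(m \<longlongrightarrow> L1) at_top" "(n \<longlongrightarrow> N1) at_top" "L0 < L1"
    using sol_limits assms unfolding x by blast
  define u where "u = 1 / (L1 - L0)"
  have u: "u > 0" using L(4) by (simp add: u_def)
  define y where "y = TT u (- u * L0) (- u * N1) x"
  have py: "positive_solution y" unfolding y_def using TT_pos[OF assms u] .
  have "abmn_sim x y" unfolding y_def using sim_iff u by blast
  moreover have "standard_solution y"
  proof -
    have "((\<lambda>i. u * m i + - u * L0) \<longlongrightarrow> u * L0 + - u * L0) at_bot" by (intro tendsto_intros L)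
    moreover have "((\<lambda>i. u * n i + - u * N1) \<longlongrightarrow> u * N1 + - u * N1) at_top" by (intro tendsto_intros L)
    moreover have "((\<lambda>i. u * m i + - u * L0) \<longlongrightarrow> u * L1 + - u * L0) at_top" by (intro tendsto_intros L)
    moreover have "u * L1 + - u * L0 = 1"
    proof -
      have "u * L1 + - u * L0 = u * (L1 - L0)" by (simp add: algebra_simps)
      then show ?thesis using L(4) unfolding u_def by simp
    qed
    ultimately show ?thesis using py unfolding y_def x TT_simp standard_solution_def
      by (simp add: x[symmetric])
  qed
  ultimately show ?thesis using py by blast
qed

lemma default_exists:
  assumes "positive_solution x"
  shows "\<exists>y. positive_solution y \<and> abmn_sim x y \<and> default_solution y"
proof -
  obtain a b m n where x: "x = (a,b,m,n)" by (cases x)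
  obtain L0 L1 N1 where L: "(m \<longlongrightarrow> L0) at_bot" "(m \<longlongrightarrow> L1) at_top" "(n \<longlongrightarrow> N1) at_top" "L0 < L1"
    using sol_limits assms unfolding x by blast
  have d: "m ((-1)+1) - m (-1) = 2 * a (-1) + b (-1)" "a (-1) > 0" "b (-1) > 0"
    using sol_facts[OF assms[unfolded x], of "-1"] by auto
  then have dpos: "m 0 - m (-1) > 0" by simp
  define u where "u = 1 / (m 0 - m (-1))"
  have u: "u > 0" using dpos by (simp add: u_def)
  define y where "y = TT u (- u * L0) (- u * N1) x"
  have py: "positive_solution y" unfolding y_def using TT_pos[OF assms u] .
  have "abmn_sim x y" unfolding y_def using sim_iff u by blast
  moreover have "default_solution y"
  proof -
    have "((\<lambda>i. u * m i + - u * L0) \<longlongrightarrow> u * L0 + - u * L0) at_bot" by (intro tendsto_intros L)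
    moreover have "((\<lambda>i. u * n i + - u * N1) \<longlongrightarrow> u * N1 + - u * N1) at_top" by (intro tendsto_intros L)
    moreover have "(u * m 0 + - u * L0) - (u * m (-1) + - u * L0) = 1"
    proof -
      have "(u * m 0 + - u * L0) - (u * m (-1) + - u * L0) = u * (m 0 - m (-1))" by (simp add: algebra_simps)
      then show ?thesis using dpos unfolding u_def by simp
    qed
    ultimately show ?thesis using py unfolding y_def x TT_simp default_solution_def
      by (simp add: x[symmetric])
  qed
  ultimately show ?thesis using py by blast
qed

theorem mainTheorem9:
  shows "equiv {q. positive_solution q}
           {(x, y). positive_solution x \<and> positive_solution y \<and> abmn_sim x y}
       \<and> (\<forall>x. positive_solution x \<longrightarrow>
             (\<exists>!y. positive_solution y \<and> abmn_sim x y \<and> standard_solution y)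
           \<and> (\<exists>!y. positive_solution y \<and> abmn_sim x y \<and> default_solution y))"
proof (intro conjI allI impI)
  show "equiv {q. positive_solution q}
           {(x, y). positive_solution x \<and> positive_solution y \<and> abmn_sim x y}"
  proof (rule equivI)
    show "refl_on {q. positive_solution q} {(x, y). positive_solution x \<and> positive_solution y \<and> abmn_sim x y}"
      unfolding refl_on_def using sim_refl by auto
    show "sym {(x, y). positive_solution x \<and> positive_solution y \<and> abmn_sim x y}"
      unfolding sym_def using sim_sym by auto
    show "trans {(x, y). positive_solution x \<and> positive_solution y \<and> abmn_sim x y}"
      unfolding trans_def using sim_trans by auto
  qed auto
next
  fix x assume px: "positive_solution x"
  show "\<exists>!y. positive_solution y \<and> abmn_sim x y \<and> standard_solution y"
  proof (rule ex_ex1I)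
    show "\<exists>y. positive_solution y \<and> abmn_sim x y \<and> standard_solution y" using standard_exists[OF px] .
  next
    fix y1 y2
    assume h1: "positive_solution y1 \<and> abmn_sim x y1 \<and> standard_solution y1"
      and h2: "positive_solution y2 \<and> abmn_sim x y2 \<and> standard_solution y2"
    then obtain \<alpha> \<beta> \<gamma> where "\<alpha> > 0" "y2 = TT \<alpha> \<beta> \<gamma> y1" using sim_same by blast
    then show "y1 = y2" using standard_unique h1 h2 by metis
  qed
  show "\<exists>!y. positive_solution y \<and> abmn_sim x y \<and> default_solution y"
  proof (rule ex_ex1I)
    show "\<exists>y. positive_solution y \<and> abmn_sim x y \<and> default_solution y" using default_exists[OF px] .
  next
    fix y1 y2
    assume h1: "positive_solution y1 \<and> abmn_sim x y1 \<and> default_solution y1"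
      and h2: "positive_solution y2 \<and> abmn_sim x y2 \<and> default_solution y2"
    then obtain \<alpha> \<beta> \<gamma> where "\<alpha> > 0" "y2 = TT \<alpha> \<beta> \<gamma> y1" using sim_same by blast
    then show "y1 = y2" using default_unique h1 h2 by metis
  qed
qed

end
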